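(* The real vector space with basis $J,H,G_a,P_a,J_a,H_a,G_{ab},P_{ab},J^*,H^*,J^*_a,H^*_a$ with the following nonzero brackets is a Lie algebra (the double extension of $\operatorname{span}\{P_a,G_a,P_{ab},G_{ab}\}$ by $\operatorname{span}\{H,J,H_a,J_a\}$): $[J,G_a]=\epsilon_{am}G_m$, $[J,P_a]=\epsilon_{am}P_m$, $[G_a,H]=-\epsilon_{am}P_m$, $[G_a,G_b]=\epsilon_{ab}H^*$, $[P_a,G_b]=\epsilon_{ab}J^*$; $[J,J_a]=\epsilon_{am}J_m$, $[J,G_{ab}]=-\epsilon_{m(a}G_{b)m}$, $[J,H_a]=\epsilon_{am}H_m$, $[J,P_{ab}]=-\epsilon_{m(a}P_{b)m}$, $[G_a,J_b]=-(\epsilon_{am}G_{bm}+\epsilon_{ab}G_{mm})$, $[G_a,H_b]=-(\epsilon_{am}P_{bm}+\epsilon_{ab}P_{mm})$, $[H,J_a]=\epsilon_{am}H_m$, $[H,G_{ab}]=-\epsilon_{m(a}P_{b)m}$, $[P_a,J_b]=-(\epsilon_{am}P_{bm}+\epsilon_{ab}P_{mm})$; $[J_a,J_b]=\epsilon_{ab}J$, $[J_a,G_{bc}]=\delta_{a(b}\epsilon_{c)m}G_m$, $[J_a,H_b]=\epsilon_{ab}H$, $[J_a,P_{bc}]=\delta_{a(b}\epsilon_{c)m}P_m$, $[G_{ab},H_c]=-\delta_{c(a}\epsilon_{b)m}P_m$; $[G_{ab},G_{cd}]=\epsilon_{(a(c}\delta_{d)b)}H^*$, $[P_{ab},G_{cd}]=\epsilon_{(a(c}\delta_{d)b)}J^*$,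 $[P_a,G_{bc}]=\epsilon_{a(b}J^*_{c)}$, $[G_a,G_{bc}]=\epsilon_{a(b}H^*_{c)}$, $[G_a,P_{bc}]=\epsilon_{a(b}J^*_{c)}$; $[J,H^*_a]=\epsilon_{am}H^*_m$, $[J,J^*_a]=\epsilon_{am}J^*_m$, $[H,H^*_a]=\epsilon_{am}J^*_m$, $[J_a,J^*]=-\epsilon_{am}J^*_m$, $[J_a,H^*]=-\epsilon_{am}H^*_m$, $[J_a,J^*_b]=\epsilon_{ab}J^*$, $[J_a,H^*_b]=\epsilon_{ab}H^*$, $[H_a,H^*]=-\epsilon_{am}J^*_m$, $[H_a,H^*_b]=\epsilon_{ab}J^*$. It admits the invariant metric with nonzero entries $\langle P_a,G_b\rangle=\delta_{ab}$, $\langle P_{ab},G_{cd}\rangle=\delta_{a(c}\delta_{d)b}-\tfrac23\delta_{ab}\delta_{cd}$, $\langle H,H^*\rangle=1$, $\langle J,J^*\rangle=1$, $\langle H_a,H^*_b\rangle=\delta_{ab}$, $\langle J_a,J^*_b\rangle=\delta_{ab}$. The subspace $\operatorname{span}\{H,J,P_a,G_a,H^*,J^*\}$ is a subalgebra isomorphic to the Extended Bargmann algebra.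
   Context: Indices $a,b,c,d,m\in\{1,2\}$, summed when repeated, $\epsilon_{12}=1$; $G_{ab},P_{ab}$ symmetric. Symmetrization without normalization ($T_{(ab)}=T_{ab}+T_{ba}$, nested from outermost to innermost). An invariant metric is a symmetric nondegenerate bilinear form with $\langle[Z,X],Y\rangle+\langle X,[Z,Y]\rangle=0$. The Extended Bargmann algebra has basis $J,H,G_a,P_a,J^*,H^*$ and nonzero brackets $[J,G_a]=\epsilon_{am}G_m$, $[J,P_a]=\epsilon_{am}P_m$, $[G_a,G_b]=\epsilon_{ab}H^*$, $[G_a,H]=-\epsilon_{am}P_m$, $[G_a,P_b]=\epsilon_{ab}J^*$. *)

theory Defs
  imports "HOL-Analysis.Analysis"
begin

datatype idx = I1 | I2

lemma UNIV_idx: "(UNIV :: idx set) = {I1, I2}"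
  by (auto intro: idx.exhaust)

instance idx :: finite
  by standard (simp add: UNIV_idx)

fun eps :: "idx \<Rightarrow> idx \<Rightarrow> real" where
  "eps I1 I2 = 1"
| "eps I2 I1 = -1"
| "eps _ _ = 0"

definition dl :: "idx \<Rightarrow> idx \<Rightarrow> real" where
  "dl a b = (if a = b then 1 else 0)"

text \<open>Unordered pairs of indices, labelling the independent components of the
  symmetric generators G_ab = G_ba and P_ab = P_ba.\<close>

datatype sym = S11 | S12 | S22

fun spair :: "idx \<Rightarrow> idx \<Rightarrow> sym" where
  "spair I1 I1 = S11"
| "spair I2 I2 = S22"
| "spair _ _ = S12"

fun sfst :: "sym \<Rightarrow> idx" where
  "sfst S11 = I1" | "sfst S12 = I1" | "sfst S22 = I2"

fun ssnd :: "sym \<Rightarrow> idx" where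
  "ssnd S11 = I1" | "ssnd S12 = I2" | "ssnd S22 = I2"

lemma UNIV_sym: "(UNIV :: sym set) = {S11, S12, S22}"
  by (auto intro: sym.exhaust)

instance sym :: finite
  by standard (simp add: UNIV_sym)

text \<open>Basis: J, H, G_a, P_a, J_a, H_a, G_ab, P_ab, J^*, H^*, J^*_a, H^*_a.\<close>

datatype bas = bJ | bH | bG idx | bP idx | bJa idx | bHa idx | bGs sym | bPs sym
  | bJs | bHs | bJsa idx | bHsa idx

lemma UNIV_bas: "(UNIV :: bas set) =
  {bJ, bH, bJs, bHs} \<union> range bG \<union> range bP \<union> range bJa \<union> range bHa
  \<union> range bGs \<union> range bPs \<union> range bJsa \<union> range bHsa"
  by (auto intro: bas.exhaust)

instance bas :: finite
  by standard (simp add: UNIV_bas)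

type_synonym V = "real ^ bas"

definition ev :: "bas \<Rightarrow> V" where "ev k = axis k 1"

abbreviation "vJ \<equiv> ev bJ"
abbreviation "vH \<equiv> ev bH"
abbreviation "vG a \<equiv> ev (bG a)"
abbreviation "vP a \<equiv> ev (bP a)"
abbreviation "vJa a \<equiv> ev (bJa a)"
abbreviation "vHa a \<equiv> ev (bHa a)"
abbreviation "vGs a b \<equiv> ev (bGs (spair a b))"
abbreviation "vPs a b \<equiv> ev (bPs (spair a b))"
abbreviation "vJs \<equiv> ev bJs"
abbreviation "vHs \<equiv> ev bHs"
abbreviation "vJsa a \<equiv> ev (bJsa a)"
abbreviation "vHsa a \<equiv> ev (bHsa a)"

text \<open>Nested unnormalised symmetrisation
  eps_((a(c) delta_d)b) = eps_ac delta_db + eps_ad delta_cb + eps_bc delta_da + eps_bd delta_ca.\<close>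
definition Tsym :: "idx \<Rightarrow> idx \<Rightarrow> idx \<Rightarrow> idx \<Rightarrow> real" where
  "Tsym a b c d = eps a c * dl d b + eps a d * dl c b + eps b c * dl d a + eps b d * dl c a"

text \<open>For G_ab, P_ab the representative indices (sfst s, ssnd s) of the
  unordered pair s are used; all formulas are symmetric in the pair, so this choice is
  immaterial.\<close>

fun tabJ :: "bas \<Rightarrow> V option" where
  "tabJ (bG a) = Some (\<Sum>m\<in>UNIV. eps a m *\<^sub>R vG m)"
| "tabJ (bP a) = Some (\<Sum>m\<in>UNIV. eps a m *\<^sub>R vP m)"
| "tabJ (bJa a) = Some (\<Sum>m\<in>UNIV. eps a m *\<^sub>R vJa m)"
| "tabJ (bGs s) = Some (- (\<Sum>m\<in>UNIV. eps m (sfst s) *\<^sub>R vGs (ssnd s) m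
                                     + eps m (ssnd s) *\<^sub>R vGs (sfst s) m))"
| "tabJ (bHa a) = Some (\<Sum>m\<in>UNIV. eps a m *\<^sub>R vHa m)"
| "tabJ (bPs s) = Some (- (\<Sum>m\<in>UNIV. eps m (sfst s) *\<^sub>R vPs (ssnd s) m
                                     + eps m (ssnd s) *\<^sub>R vPs (sfst s) m))"
| "tabJ (bHsa a) = Some (\<Sum>m\<in>UNIV. eps a m *\<^sub>R vHsa m)"
| "tabJ (bJsa a) = Some (\<Sum>m\<in>UNIV. eps a m *\<^sub>R vJsa m)"
| "tabJ _ = None"

fun tabH :: "bas \<Rightarrow> V option" where
  "tabH (bJa a) = Some (\<Sum>m\<in>UNIV. eps a m *\<^sub>R vHa m)"
| "tabH (bGs s) = Some (- (\<Sum>m\<in>UNIV. eps m (sfst s) *\<^sub>R vPs (ssnd s) m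
                                     + eps m (ssnd s) *\<^sub>R vPs (sfst s) m))"
| "tabH (bHsa a) = Some (\<Sum>m\<in>UNIV. eps a m *\<^sub>R vJsa m)"
| "tabH _ = None"

fun tabG :: "idx \<Rightarrow> bas \<Rightarrow> V option" where
  "tabG a bH = Some (- (\<Sum>m\<in>UNIV. eps a m *\<^sub>R vP m))"
| "tabG a (bG b) = Some (eps a b *\<^sub>R vHs)"
| "tabG a (bJa b) = Some (- (\<Sum>m\<in>UNIV. eps a m *\<^sub>R vGs b m + eps a b *\<^sub>R vGs m m))"
| "tabG a (bHa b) = Some (- (\<Sum>m\<in>UNIV. eps a m *\<^sub>R vPs b m + eps a b *\<^sub>R vPs m m))"
| "tabG a (bGs s) = Some (eps a (sfst s) *\<^sub>R vHsa (ssnd s) + eps a (ssnd s) *\<^sub>R vHsa (sfst s))"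
| "tabG a (bPs s) = Some (eps a (sfst s) *\<^sub>R vJsa (ssnd s) + eps a (ssnd s) *\<^sub>R vJsa (sfst s))"
| "tabG a _ = None"

fun tabP :: "idx \<Rightarrow> bas \<Rightarrow> V option" where
  "tabP a (bG b) = Some (eps a b *\<^sub>R vJs)"
| "tabP a (bJa b) = Some (- (\<Sum>m\<in>UNIV. eps a m *\<^sub>R vPs b m + eps a b *\<^sub>R vPs m m))"
| "tabP a (bGs s) = Some (eps a (sfst s) *\<^sub>R vJsa (ssnd s) + eps a (ssnd s) *\<^sub>R vJsa (sfst s))"
| "tabP a _ = None"

fun tabJa :: "idx \<Rightarrow> bas \<Rightarrow> V option" where
  "tabJa a (bJa b) = Some (eps a b *\<^sub>R vJ)"
| "tabJa a (bGs s) = Some (\<Sum>m\<in>UNIV. (dl a (sfst s) * eps (ssnd s) m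
                                          + dl a (ssnd s) * eps (sfst s) m) *\<^sub>R vG m)"
| "tabJa a (bHa b) = Some (eps a b *\<^sub>R vH)"
| "tabJa a (bPs s) = Some (\<Sum>m\<in>UNIV. (dl a (sfst s) * eps (ssnd s) m
                                          + dl a (ssnd s) * eps (sfst s) m) *\<^sub>R vP m)"
| "tabJa a bJs = Some (- (\<Sum>m\<in>UNIV. eps a m *\<^sub>R vJsa m))"
| "tabJa a bHs = Some (- (\<Sum>m\<in>UNIV. eps a m *\<^sub>R vHsa m))"
| "tabJa a (bJsa b) = Some (eps a b *\<^sub>R vJs)"
| "tabJa a (bHsa b) = Some (eps a b *\<^sub>R vHs)"
| "tabJa a _ = None"

fun tabHa :: "idx \<Rightarrow> bas \<Rightarrow> V option" where
  "tabHa a bHs = Some (- (\<Sum>m\<in>UNIV. eps a m *\<^sub>R vJsa m))"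
| "tabHa a (bHsa b) = Some (eps a b *\<^sub>R vJs)"
| "tabHa a _ = None"

fun tabGs :: "sym \<Rightarrow> bas \<Rightarrow> V option" where
  "tabGs s (bHa c) = Some (- (\<Sum>m\<in>UNIV. (dl c (sfst s) * eps (ssnd s) m
                                          + dl c (ssnd s) * eps (sfst s) m) *\<^sub>R vP m))"
| "tabGs s (bGs t) = Some (Tsym (sfst s) (ssnd s) (sfst t) (ssnd t) *\<^sub>R vHs)"
| "tabGs s _ = None"

fun tabPs :: "sym \<Rightarrow> bas \<Rightarrow> V option" where
  "tabPs s (bGs t) = Some (Tsym (sfst s) (ssnd s) (sfst t) (ssnd t) *\<^sub>R vJs)"
| "tabPs s _ = None"

text \<open>The table of listed brackets [X,Y] (in the orientation listed in the
  statement): Some value for listed ordered pairs, None otherwise.\<close>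
fun tab :: "bas \<Rightarrow> bas \<Rightarrow> V option" where
  "tab bJ j = tabJ j"
| "tab bH j = tabH j"
| "tab (bG a) j = tabG a j"
| "tab (bP a) j = tabP a j"
| "tab (bJa a) j = tabJa a j"
| "tab (bHa a) j = tabHa a j"
| "tab (bGs s) j = tabGs s j"
| "tab (bPs s) j = tabPs s j"
| "tab _ _ = None"

definition bb :: "bas \<Rightarrow> bas \<Rightarrow> V" where
  "bb i j = (case tab i j of Some v \<Rightarrow> v
             | None \<Rightarrow> (case tab j i of Some v \<Rightarrow> - v | None \<Rightarrow> 0))"

definition br :: "V \<Rightarrow> V \<Rightarrow> V" where
  "br x y = (\<Sum>i\<in>UNIV. \<Sum>j\<in>UNIV. (x $ i * y $ j) *\<^sub>R bb i j)"

definition gt :: "bas \<Rightarrow> bas \<Rightarrow> real" where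
  "gt i j = (case (i, j) of
      (bP a, bG b) \<Rightarrow> dl a b
    | (bPs s, bGs t) \<Rightarrow> dl (sfst s) (sfst t) * dl (ssnd t) (ssnd s)
                      + dl (sfst s) (ssnd t) * dl (sfst t) (ssnd s)
                      - 2/3 * dl (sfst s) (ssnd s) * dl (sfst t) (ssnd t)
    | (bH, bHs) \<Rightarrow> 1
    | (bJ, bJs) \<Rightarrow> 1
    | (bHa a, bHsa b) \<Rightarrow> dl a b
    | (bJa a, bJsa b) \<Rightarrow> dl a b
    | _ \<Rightarrow> 0)"

definition gm :: "bas \<Rightarrow> bas \<Rightarrow> real" where
  "gm i j = gt i j + gt j i"

definition met :: "V \<Rightarrow> V \<Rightarrow> real" where
  "met x y = (\<Sum>i\<in>UNIV. \<Sum>j\<in>UNIV. x $ i * y $ j * gm i j)"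

datatype ebas = eJ | eH | eG idx | eP idx | eJs | eHs

lemma UNIV_ebas: "(UNIV :: ebas set) = {eJ, eH, eJs, eHs} \<union> range eG \<union> range eP"
  by (auto intro: ebas.exhaust)

instance ebas :: finite
  by standard (simp add: UNIV_ebas)

type_synonym EB = "real ^ ebas"

definition eev :: "ebas \<Rightarrow> EB" where "eev k = axis k 1"

fun etab :: "ebas \<Rightarrow> ebas \<Rightarrow> EB option" where
  "etab eJ (eG a) = Some (\<Sum>m\<in>UNIV. eps a m *\<^sub>R eev (eG m))"
| "etab eJ (eP a) = Some (\<Sum>m\<in>UNIV. eps a m *\<^sub>R eev (eP m))"
| "etab (eG a) (eG b) = Some (eps a b *\<^sub>R eev eHs)"
| "etab (eG a) eH = Some (- (\<Sum>m\<in>UNIV. eps a m *\<^sub>R eev (eP m)))"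
| "etab (eG a) (eP b) = Some (eps a b *\<^sub>R eev eJs)"
| "etab _ _ = None"

definition ebb :: "ebas \<Rightarrow> ebas \<Rightarrow> EB" where
  "ebb i j = (case etab i j of Some v \<Rightarrow> v
              | None \<Rightarrow> (case etab j i of Some v \<Rightarrow> - v | None \<Rightarrow> 0))"

definition ebr :: "EB \<Rightarrow> EB \<Rightarrow> EB" where
  "ebr x y = (\<Sum>i\<in>UNIV. \<Sum>j\<in>UNIV. (x $ i * y $ j) *\<^sub>R ebb i j)"

definition lie_algebra :: "('v::real_vector \<Rightarrow> 'v \<Rightarrow> 'v) \<Rightarrow> bool" where
  "lie_algebra b \<longleftrightarrow> bilinear b \<and> (\<forall>x. b x x = 0)
     \<and> (\<forall>x y z. b x (b y z) + b y (b z x) + b z (b x y) = 0)"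

definition invariant_metric :: "('v::real_vector \<Rightarrow> 'v \<Rightarrow> 'v) \<Rightarrow> ('v \<Rightarrow> 'v \<Rightarrow> real) \<Rightarrow> bool" where
  "invariant_metric b B \<longleftrightarrow> bilinear B \<and> (\<forall>x y. B x y = B y x)
     \<and> (\<forall>x. (\<forall>y. B x y = 0) \<longrightarrow> x = 0)
     \<and> (\<forall>x y z. B (b z x) y + B x (b z y) = 0)"

definition lie_subalgebra :: "('v::real_vector \<Rightarrow> 'v \<Rightarrow> 'v) \<Rightarrow> 'v set \<Rightarrow> bool" where
  "lie_subalgebra b S \<longleftrightarrow> subspace S \<and> (\<forall>x\<in>S. \<forall>y\<in>S. b x y \<in> S)"

definition lie_iso_sub :: "('v::real_vector \<Rightarrow> 'v \<Rightarrow> 'v) \<Rightarrow> 'v set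
     \<Rightarrow> ('w::real_vector \<Rightarrow> 'w \<Rightarrow> 'w) \<Rightarrow> bool" where
  "lie_iso_sub b S c \<longleftrightarrow> (\<exists>f. linear f \<and> bij_betw f S UNIV
      \<and> (\<forall>x\<in>S. \<forall>y\<in>S. f (b x y) = c (f x) (f y)))"

definition bargmann_sub :: "V set" where
  "bargmann_sub = span ({vH, vJ, vHs, vJs} \<union> range (\<lambda>a. vP a) \<union> range (\<lambda>a. vG a))"

end

theory Submission
  imports Defs
begin


definition all_bas :: "bas list" where
"all_bas = [bJ, bH, (bG I1), (bG I2), (bP I1), (bP I2), (bJa I1), (bJa I2), (bHa I1), (bHa I2), (bGs S11), (bGs S12), (bGs S22), (bPs S11), (bPs S12), (bPs S22), bJs, bHs, (bJsa I1), (bJsa I2), (bHsa I1), (bHsa I2)]"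

lemma UNIV_all_bas: "(UNIV::bas set) = set all_bas"
  by (simp add: UNIV_bas UNIV_idx UNIV_sym all_bas_def image_def; blast)

definition vl :: "(bas \<times> real) list \<Rightarrow> V" where
  "vl L = (\<Sum>(b,c)\<leftarrow>L. c *\<^sub>R ev b)"
definition coef :: "(bas \<times> real) list \<Rightarrow> bas \<Rightarrow> real" where
  "coef L l = (\<Sum>(b,c)\<leftarrow>L. if b = l then c else 0)"

lemma ev_comp: "ev k $ i = (if i = k then 1 else 0)"
  by (simp add: ev_def axis_def)

lemma vl_comp: "vl L $ l = coef L l"
  by (induction L) (auto simp: vl_def coef_def ev_comp)

lemma coef_notin: "l \<notin> set (map fst L) \<Longrightarrow> coef L l = 0"
  by (induction L) (auto simp: coef_def)

lemma vl_eq_iff: "vl A = vl B \<longleftrightarrow> list_all (\<lambda>l. coef A l = coef B l) (map fst (A @ B))"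
proof
  assume "vl A = vl B" then show "list_all (\<lambda>l. coef A l = coef B l) (map fst (A @ B))"
    by (simp add: list_all_iff flip: vl_comp)
next
  assume h: "list_all (\<lambda>l. coef A l = coef B l) (map fst (A @ B))"
  show "vl A = vl B"
    unfolding vec_eq_iff
  proof
    fix l
    show "vl A $ l = vl B $ l"
    proof (cases "l \<in> set (map fst (A @ B))")
      case True then show ?thesis using h by (simp add: vl_comp list_all_iff)
    next
      case False
      then have "l \<notin> set (map fst A)" "l \<notin> set (map fst B)" by auto
      then show ?thesis by (simp add: vl_comp coef_notin)
    qed
  qed
qed

lemma vl_Nil: "vl [] = 0" by (simp add: vl_def)
lemma vl_eq0_iff: "vl A = 0 \<longleftrightarrow> list_all (\<lambda>l. coef A l = 0) (map fst A)"
  using vl_eq_iff[of A "[]"] by (simp add: vl_Nil coef_def)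
lemma vl_Cons: "vl ((b,c)#L) = c *\<^sub>R ev b + vl L" by (simp add: vl_def)
lemma vl_append: "vl (A @ B) = vl A + vl B" by (simp add: vl_def)
lemma vl_scale: "c *\<^sub>R vl L = vl (map (\<lambda>(b,d). (b, c*d)) L)"
  by (induction L) (auto simp: vl_def scaleR_add_right)
lemma vl_neg: "- vl L = vl (map (\<lambda>(b,d). (b, - d)) L)"
  using vl_scale[of "-1" L] by simp

lemma to_vl_ev: "ev b = vl [(b,1)]" by (simp add: vl_def)
lemma to_vl_zero: "(0::V) = vl []" by (simp add: vl_def)
lemma to_vl_add: "vl A + vl B = vl (A @ B)" by (simp add: vl_append)
lemma to_vl_diff: "vl A - vl B = vl (A @ map (\<lambda>(b,d). (b, - d)) B)"
  by (simp add: vl_append vl_neg[symmetric])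

lemmas to_vl = to_vl_ev to_vl_add to_vl_diff vl_scale vl_neg

lemma UNIV_idx_sum: "(\<Sum>m\<in>(UNIV::idx set). f m) = f I1 + f I2"
  by (simp add: UNIV_idx)

fun row_J :: "bas \<Rightarrow> (bas \<times> real) list" where
  "row_J (bG I1) = [((bG I2), (1))]"
|   "row_J (bG I2) = [((bG I1), (-1))]"
|   "row_J (bP I1) = [((bP I2), (1))]"
|   "row_J (bP I2) = [((bP I1), (-1))]"
|   "row_J (bJa I1) = [((bJa I2), (1))]"
|   "row_J (bJa I2) = [((bJa I1), (-1))]"
|   "row_J (bHa I1) = [((bHa I2), (1))]"
|   "row_J (bHa I2) = [((bHa I1), (-1))]"
|   "row_J (bGs S11) = [((bGs S12), (2))]"
|   "row_J (bGs S12) = [((bGs S11), (-1)), ((bGs S22), (1))]"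
|   "row_J (bGs S22) = [((bGs S12), (-2))]"
|   "row_J (bPs S11) = [((bPs S12), (2))]"
|   "row_J (bPs S12) = [((bPs S11), (-1)), ((bPs S22), (1))]"
|   "row_J (bPs S22) = [((bPs S12), (-2))]"
|   "row_J (bJsa I1) = [((bJsa I2), (1))]"
|   "row_J (bJsa I2) = [((bJsa I1), (-1))]"
|   "row_J (bHsa I1) = [((bHsa I2), (1))]"
|   "row_J (bHsa I2) = [((bHsa I1), (-1))]"
|   "row_J _ = []"

fun row_H :: "bas \<Rightarrow> (bas \<times> real) list" where
  "row_H (bG I1) = [((bP I2), (1))]"
|   "row_H (bG I2) = [((bP I1), (-1))]"
|   "row_H (bJa I1) = [((bHa I2), (1))]"
|   "row_H (bJa I2) = [((bHa I1), (-1))]"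
|   "row_H (bGs S11) = [((bPs S12), (2))]"
|   "row_H (bGs S12) = [((bPs S11), (-1)), ((bPs S22), (1))]"
|   "row_H (bGs S22) = [((bPs S12), (-2))]"
|   "row_H (bHsa I1) = [((bJsa I2), (1))]"
|   "row_H (bHsa I2) = [((bJsa I1), (-1))]"
|   "row_H _ = []"

fun row_G1 :: "bas \<Rightarrow> (bas \<times> real) list" where
  "row_G1 bJ = [((bG I2), (-1))]"
|   "row_G1 bH = [((bP I2), (-1))]"
|   "row_G1 (bG I2) = [(bHs, (1))]"
|   "row_G1 (bP I2) = [(bJs, (1))]"
|   "row_G1 (bJa I1) = [((bGs S12), (-1))]"
|   "row_G1 (bJa I2) = [((bGs S11), (-1)), ((bGs S22), (-2))]"
|   "row_G1 (bHa I1) = [((bPs S12), (-1))]"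
|   "row_G1 (bHa I2) = [((bPs S11), (-1)), ((bPs S22), (-2))]"
|   "row_G1 (bGs S12) = [((bHsa I1), (1))]"
|   "row_G1 (bGs S22) = [((bHsa I2), (2))]"
|   "row_G1 (bPs S12) = [((bJsa I1), (1))]"
|   "row_G1 (bPs S22) = [((bJsa I2), (2))]"
|   "row_G1 _ = []"

fun row_G2 :: "bas \<Rightarrow> (bas \<times> real) list" where
  "row_G2 bJ = [((bG I1), (1))]"
|   "row_G2 bH = [((bP I1), (1))]"
|   "row_G2 (bG I1) = [(bHs, (-1))]"
|   "row_G2 (bP I1) = [(bJs, (-1))]"
|   "row_G2 (bJa I1) = [((bGs S11), (2)), ((bGs S22), (1))]"
|   "row_G2 (bJa I2) = [((bGs S12), (1))]"
|   "row_G2 (bHa I1) = [((bPs S11), (2)), ((bPs S22), (1))]"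
|   "row_G2 (bHa I2) = [((bPs S12), (1))]"
|   "row_G2 (bGs S11) = [((bHsa I1), (-2))]"
|   "row_G2 (bGs S12) = [((bHsa I2), (-1))]"
|   "row_G2 (bPs S11) = [((bJsa I1), (-2))]"
|   "row_G2 (bPs S12) = [((bJsa I2), (-1))]"
|   "row_G2 _ = []"

fun row_P1 :: "bas \<Rightarrow> (bas \<times> real) list" where
  "row_P1 bJ = [((bP I2), (-1))]"
|   "row_P1 (bG I2) = [(bJs, (1))]"
|   "row_P1 (bJa I1) = [((bPs S12), (-1))]"
|   "row_P1 (bJa I2) = [((bPs S11), (-1)), ((bPs S22), (-2))]"
|   "row_P1 (bGs S12) = [((bJsa I1), (1))]"
|   "row_P1 (bGs S22) = [((bJsa I2), (2))]"
|   "row_P1 _ = []"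

fun row_P2 :: "bas \<Rightarrow> (bas \<times> real) list" where
  "row_P2 bJ = [((bP I1), (1))]"
|   "row_P2 (bG I1) = [(bJs, (-1))]"
|   "row_P2 (bJa I1) = [((bPs S11), (2)), ((bPs S22), (1))]"
|   "row_P2 (bJa I2) = [((bPs S12), (1))]"
|   "row_P2 (bGs S11) = [((bJsa I1), (-2))]"
|   "row_P2 (bGs S12) = [((bJsa I2), (-1))]"
|   "row_P2 _ = []"

fun row_Ja1 :: "bas \<Rightarrow> (bas \<times> real) list" where
  "row_Ja1 bJ = [((bJa I2), (-1))]"
|   "row_Ja1 bH = [((bHa I2), (-1))]"
|   "row_Ja1 (bG I1) = [((bGs S12), (1))]"
|   "row_Ja1 (bG I2) = [((bGs S11), (-2)), ((bGs S22), (-1))]"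
|   "row_Ja1 (bP I1) = [((bPs S12), (1))]"
|   "row_Ja1 (bP I2) = [((bPs S11), (-2)), ((bPs S22), (-1))]"
|   "row_Ja1 (bJa I2) = [(bJ, (1))]"
|   "row_Ja1 (bHa I2) = [(bH, (1))]"
|   "row_Ja1 (bGs S11) = [((bG I2), (2))]"
|   "row_Ja1 (bGs S12) = [((bG I1), (-1))]"
|   "row_Ja1 (bPs S11) = [((bP I2), (2))]"
|   "row_Ja1 (bPs S12) = [((bP I1), (-1))]"
|   "row_Ja1 bJs = [((bJsa I2), (-1))]"
|   "row_Ja1 bHs = [((bHsa I2), (-1))]"
|   "row_Ja1 (bJsa I2) = [(bJs, (1))]"
|   "row_Ja1 (bHsa I2) = [(bHs, (1))]"
|   "row_Ja1 _ = []"

fun row_Ja2 :: "bas \<Rightarrow> (bas \<times> real) list" where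
  "row_Ja2 bJ = [((bJa I1), (1))]"
|   "row_Ja2 bH = [((bHa I1), (1))]"
|   "row_Ja2 (bG I1) = [((bGs S11), (1)), ((bGs S22), (2))]"
|   "row_Ja2 (bG I2) = [((bGs S12), (-1))]"
|   "row_Ja2 (bP I1) = [((bPs S11), (1)), ((bPs S22), (2))]"
|   "row_Ja2 (bP I2) = [((bPs S12), (-1))]"
|   "row_Ja2 (bJa I1) = [(bJ, (-1))]"
|   "row_Ja2 (bHa I1) = [(bH, (-1))]"
|   "row_Ja2 (bGs S12) = [((bG I2), (1))]"
|   "row_Ja2 (bGs S22) = [((bG I1), (-2))]"
|   "row_Ja2 (bPs S12) = [((bP I2), (1))]"
|   "row_Ja2 (bPs S22) = [((bP I1), (-2))]"
|   "row_Ja2 bJs = [((bJsa I1), (1))]"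
|   "row_Ja2 bHs = [((bHsa I1), (1))]"
|   "row_Ja2 (bJsa I1) = [(bJs, (-1))]"
|   "row_Ja2 (bHsa I1) = [(bHs, (-1))]"
|   "row_Ja2 _ = []"

fun row_Ha1 :: "bas \<Rightarrow> (bas \<times> real) list" where
  "row_Ha1 bJ = [((bHa I2), (-1))]"
|   "row_Ha1 (bG I1) = [((bPs S12), (1))]"
|   "row_Ha1 (bG I2) = [((bPs S11), (-2)), ((bPs S22), (-1))]"
|   "row_Ha1 (bJa I2) = [(bH, (1))]"
|   "row_Ha1 (bGs S11) = [((bP I2), (2))]"
|   "row_Ha1 (bGs S12) = [((bP I1), (-1))]"
|   "row_Ha1 bHs = [((bJsa I2), (-1))]"
|   "row_Ha1 (bHsa I2) = [(bJs, (1))]"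
|   "row_Ha1 _ = []"

fun row_Ha2 :: "bas \<Rightarrow> (bas \<times> real) list" where
  "row_Ha2 bJ = [((bHa I1), (1))]"
|   "row_Ha2 (bG I1) = [((bPs S11), (1)), ((bPs S22), (2))]"
|   "row_Ha2 (bG I2) = [((bPs S12), (-1))]"
|   "row_Ha2 (bJa I1) = [(bH, (-1))]"
|   "row_Ha2 (bGs S12) = [((bP I2), (1))]"
|   "row_Ha2 (bGs S22) = [((bP I1), (-2))]"
|   "row_Ha2 bHs = [((bJsa I1), (1))]"
|   "row_Ha2 (bHsa I1) = [(bJs, (-1))]"
|   "row_Ha2 _ = []"

fun row_Gs11 :: "bas \<Rightarrow> (bas \<times> real) list" where
  "row_Gs11 bJ = [((bGs S12), (-2))]"
|   "row_Gs11 bH = [((bPs S12), (-2))]"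
|   "row_Gs11 (bG I2) = [((bHsa I1), (2))]"
|   "row_Gs11 (bP I2) = [((bJsa I1), (2))]"
|   "row_Gs11 (bJa I1) = [((bG I2), (-2))]"
|   "row_Gs11 (bHa I1) = [((bP I2), (-2))]"
|   "row_Gs11 (bGs S12) = [(bHs, (2))]"
|   "row_Gs11 (bPs S12) = [(bJs, (2))]"
|   "row_Gs11 _ = []"

fun row_Gs12 :: "bas \<Rightarrow> (bas \<times> real) list" where
  "row_Gs12 bJ = [((bGs S11), (1)), ((bGs S22), (-1))]"
|   "row_Gs12 bH = [((bPs S11), (1)), ((bPs S22), (-1))]"
|   "row_Gs12 (bG I1) = [((bHsa I1), (-1))]"
|   "row_Gs12 (bG I2) = [((bHsa I2), (1))]"
|   "row_Gs12 (bP I1) = [((bJsa I1), (-1))]"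
|   "row_Gs12 (bP I2) = [((bJsa I2), (1))]"
|   "row_Gs12 (bJa I1) = [((bG I1), (1))]"
|   "row_Gs12 (bJa I2) = [((bG I2), (-1))]"
|   "row_Gs12 (bHa I1) = [((bP I1), (1))]"
|   "row_Gs12 (bHa I2) = [((bP I2), (-1))]"
|   "row_Gs12 (bGs S11) = [(bHs, (-2))]"
|   "row_Gs12 (bGs S22) = [(bHs, (2))]"
|   "row_Gs12 (bPs S11) = [(bJs, (-2))]"
|   "row_Gs12 (bPs S22) = [(bJs, (2))]"
|   "row_Gs12 _ = []"

fun row_Gs22 :: "bas \<Rightarrow> (bas \<times> real) list" where
  "row_Gs22 bJ = [((bGs S12), (2))]"
|   "row_Gs22 bH = [((bPs S12), (2))]"
|   "row_Gs22 (bG I1) = [((bHsa I2), (-2))]"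
|   "row_Gs22 (bP I1) = [((bJsa I2), (-2))]"
|   "row_Gs22 (bJa I2) = [((bG I1), (2))]"
|   "row_Gs22 (bHa I2) = [((bP I1), (2))]"
|   "row_Gs22 (bGs S12) = [(bHs, (-2))]"
|   "row_Gs22 (bPs S12) = [(bJs, (-2))]"
|   "row_Gs22 _ = []"

fun row_Ps11 :: "bas \<Rightarrow> (bas \<times> real) list" where
  "row_Ps11 bJ = [((bPs S12), (-2))]"
|   "row_Ps11 (bG I2) = [((bJsa I1), (2))]"
|   "row_Ps11 (bJa I1) = [((bP I2), (-2))]"
|   "row_Ps11 (bGs S12) = [(bJs, (2))]"
|   "row_Ps11 _ = []"

fun row_Ps12 :: "bas \<Rightarrow> (bas \<times> real) list" where
  "row_Ps12 bJ = [((bPs S11), (1)), ((bPs S22), (-1))]"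
|   "row_Ps12 (bG I1) = [((bJsa I1), (-1))]"
|   "row_Ps12 (bG I2) = [((bJsa I2), (1))]"
|   "row_Ps12 (bJa I1) = [((bP I1), (1))]"
|   "row_Ps12 (bJa I2) = [((bP I2), (-1))]"
|   "row_Ps12 (bGs S11) = [(bJs, (-2))]"
|   "row_Ps12 (bGs S22) = [(bJs, (2))]"
|   "row_Ps12 _ = []"

fun row_Ps22 :: "bas \<Rightarrow> (bas \<times> real) list" where
  "row_Ps22 bJ = [((bPs S12), (2))]"
|   "row_Ps22 (bG I1) = [((bJsa I2), (-2))]"
|   "row_Ps22 (bJa I2) = [((bP I1), (2))]"
|   "row_Ps22 (bGs S12) = [(bJs, (-2))]"
|   "row_Ps22 _ = []"

fun row_Js :: "bas \<Rightarrow> (bas \<times> real) list" where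
  "row_Js (bJa I1) = [((bJsa I2), (1))]"
|   "row_Js (bJa I2) = [((bJsa I1), (-1))]"
|   "row_Js _ = []"

fun row_Hs :: "bas \<Rightarrow> (bas \<times> real) list" where
  "row_Hs (bJa I1) = [((bHsa I2), (1))]"
|   "row_Hs (bJa I2) = [((bHsa I1), (-1))]"
|   "row_Hs (bHa I1) = [((bJsa I2), (1))]"
|   "row_Hs (bHa I2) = [((bJsa I1), (-1))]"
|   "row_Hs _ = []"

fun row_Jsa1 :: "bas \<Rightarrow> (bas \<times> real) list" where
  "row_Jsa1 bJ = [((bJsa I2), (-1))]"
|   "row_Jsa1 (bJa I2) = [(bJs, (1))]"
|   "row_Jsa1 _ = []"

fun row_Jsa2 :: "bas \<Rightarrow> (bas \<times> real) list" where
  "row_Jsa2 bJ = [((bJsa I1), (1))]"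
|   "row_Jsa2 (bJa I1) = [(bJs, (-1))]"
|   "row_Jsa2 _ = []"

fun row_Hsa1 :: "bas \<Rightarrow> (bas \<times> real) list" where
  "row_Hsa1 bJ = [((bHsa I2), (-1))]"
|   "row_Hsa1 bH = [((bJsa I2), (-1))]"
|   "row_Hsa1 (bJa I2) = [(bHs, (1))]"
|   "row_Hsa1 (bHa I2) = [(bJs, (1))]"
|   "row_Hsa1 _ = []"

fun row_Hsa2 :: "bas \<Rightarrow> (bas \<times> real) list" where
  "row_Hsa2 bJ = [((bHsa I1), (1))]"
|   "row_Hsa2 bH = [((bJsa I1), (1))]"
|   "row_Hsa2 (bJa I1) = [(bHs, (-1))]"
|   "row_Hsa2 (bHa I1) = [(bJs, (-1))]"
|   "row_Hsa2 _ = []"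

fun T :: "bas \<Rightarrow> bas \<Rightarrow> (bas \<times> real) list" where
  "T bJ j = row_J j"
|   "T bH j = row_H j"
|   "T (bG I1) j = row_G1 j"
|   "T (bG I2) j = row_G2 j"
|   "T (bP I1) j = row_P1 j"
|   "T (bP I2) j = row_P2 j"
|   "T (bJa I1) j = row_Ja1 j"
|   "T (bJa I2) j = row_Ja2 j"
|   "T (bHa I1) j = row_Ha1 j"
|   "T (bHa I2) j = row_Ha2 j"
|   "T (bGs S11) j = row_Gs11 j"
|   "T (bGs S12) j = row_Gs12 j"
|   "T (bGs S22) j = row_Gs22 j"
|   "T (bPs S11) j = row_Ps11 j"
|   "T (bPs S12) j = row_Ps12 j"
|   "T (bPs S22) j = row_Ps22 j"
|   "T bJs j = row_Js j"
|   "T bHs j = row_Hs j"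
|   "T (bJsa I1) j = row_Jsa1 j"
|   "T (bJsa I2) j = row_Jsa2 j"
|   "T (bHsa I1) j = row_Hsa1 j"
|   "T (bHsa I2) j = row_Hsa2 j"

lemma bbT_0: "\<forall>j\<in>set all_bas. bb bJ j = vl (T bJ j)"
  by (simp add: all_bas_def bb_def UNIV_idx_sum Tsym_def dl_def to_vl vl_eq_iff vl_eq0_iff vl_Nil coef_def)

lemma bbT_1: "\<forall>j\<in>set all_bas. bb bH j = vl (T bH j)"
  by (simp add: all_bas_def bb_def UNIV_idx_sum Tsym_def dl_def to_vl vl_eq_iff vl_eq0_iff vl_Nil coef_def)

lemma bbT_2: "\<forall>j\<in>set all_bas. bb (bG I1) j = vl (T (bG I1) j)"
  by (simp add: all_bas_def bb_def UNIV_idx_sum Tsym_def dl_def to_vl vl_eq_iff vl_eq0_iff vl_Nil coef_def)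

lemma bbT_3: "\<forall>j\<in>set all_bas. bb (bG I2) j = vl (T (bG I2) j)"
  by (simp add: all_bas_def bb_def UNIV_idx_sum Tsym_def dl_def to_vl vl_eq_iff vl_eq0_iff vl_Nil coef_def)

lemma bbT_4: "\<forall>j\<in>set all_bas. bb (bP I1) j = vl (T (bP I1) j)"
  by (simp add: all_bas_def bb_def UNIV_idx_sum Tsym_def dl_def to_vl vl_eq_iff vl_eq0_iff vl_Nil coef_def)

lemma bbT_5: "\<forall>j\<in>set all_bas. bb (bP I2) j = vl (T (bP I2) j)"
  by (simp add: all_bas_def bb_def UNIV_idx_sum Tsym_def dl_def to_vl vl_eq_iff vl_eq0_iff vl_Nil coef_def)

lemma bbT_6: "\<forall>j\<in>set all_bas. bb (bJa I1) j = vl (T (bJa I1) j)"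
  by (simp add: all_bas_def bb_def UNIV_idx_sum Tsym_def dl_def to_vl vl_eq_iff vl_eq0_iff vl_Nil coef_def)

lemma bbT_7: "\<forall>j\<in>set all_bas. bb (bJa I2) j = vl (T (bJa I2) j)"
  by (simp add: all_bas_def bb_def UNIV_idx_sum Tsym_def dl_def to_vl vl_eq_iff vl_eq0_iff vl_Nil coef_def)

lemma bbT_8: "\<forall>j\<in>set all_bas. bb (bHa I1) j = vl (T (bHa I1) j)"
  by (simp add: all_bas_def bb_def UNIV_idx_sum Tsym_def dl_def to_vl vl_eq_iff vl_eq0_iff vl_Nil coef_def)

lemma bbT_9: "\<forall>j\<in>set all_bas. bb (bHa I2) j = vl (T (bHa I2) j)"
  by (simp add: all_bas_def bb_def UNIV_idx_sum Tsym_def dl_def to_vl vl_eq_iff vl_eq0_iff vl_Nil coef_def)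

lemma bbT_10: "\<forall>j\<in>set all_bas. bb (bGs S11) j = vl (T (bGs S11) j)"
  by (simp add: all_bas_def bb_def UNIV_idx_sum Tsym_def dl_def to_vl vl_eq_iff vl_eq0_iff vl_Nil coef_def)

lemma bbT_11: "\<forall>j\<in>set all_bas. bb (bGs S12) j = vl (T (bGs S12) j)"
  by (simp add: all_bas_def bb_def UNIV_idx_sum Tsym_def dl_def to_vl vl_eq_iff vl_eq0_iff vl_Nil coef_def)

lemma bbT_12: "\<forall>j\<in>set all_bas. bb (bGs S22) j = vl (T (bGs S22) j)"
  by (simp add: all_bas_def bb_def UNIV_idx_sum Tsym_def dl_def to_vl vl_eq_iff vl_eq0_iff vl_Nil coef_def)

lemma bbT_13: "\<forall>j\<in>set all_bas. bb (bPs S11) j = vl (T (bPs S11) j)"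
  by (simp add: all_bas_def bb_def UNIV_idx_sum Tsym_def dl_def to_vl vl_eq_iff vl_eq0_iff vl_Nil coef_def)

lemma bbT_14: "\<forall>j\<in>set all_bas. bb (bPs S12) j = vl (T (bPs S12) j)"
  by (simp add: all_bas_def bb_def UNIV_idx_sum Tsym_def dl_def to_vl vl_eq_iff vl_eq0_iff vl_Nil coef_def)

lemma bbT_15: "\<forall>j\<in>set all_bas. bb (bPs S22) j = vl (T (bPs S22) j)"
  by (simp add: all_bas_def bb_def UNIV_idx_sum Tsym_def dl_def to_vl vl_eq_iff vl_eq0_iff vl_Nil coef_def)

lemma bbT_16: "\<forall>j\<in>set all_bas. bb bJs j = vl (T bJs j)"
  by (simp add: all_bas_def bb_def UNIV_idx_sum Tsym_def dl_def to_vl vl_eq_iff vl_eq0_iff vl_Nil coef_def)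

lemma bbT_17: "\<forall>j\<in>set all_bas. bb bHs j = vl (T bHs j)"
  by (simp add: all_bas_def bb_def UNIV_idx_sum Tsym_def dl_def to_vl vl_eq_iff vl_eq0_iff vl_Nil coef_def)

lemma bbT_18: "\<forall>j\<in>set all_bas. bb (bJsa I1) j = vl (T (bJsa I1) j)"
  by (simp add: all_bas_def bb_def UNIV_idx_sum Tsym_def dl_def to_vl vl_eq_iff vl_eq0_iff vl_Nil coef_def)

lemma bbT_19: "\<forall>j\<in>set all_bas. bb (bJsa I2) j = vl (T (bJsa I2) j)"
  by (simp add: all_bas_def bb_def UNIV_idx_sum Tsym_def dl_def to_vl vl_eq_iff vl_eq0_iff vl_Nil coef_def)

lemma bbT_20: "\<forall>j\<in>set all_bas. bb (bHsa I1) j = vl (T (bHsa I1) j)"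
  by (simp add: all_bas_def bb_def UNIV_idx_sum Tsym_def dl_def to_vl vl_eq_iff vl_eq0_iff vl_Nil coef_def)

lemma bbT_21: "\<forall>j\<in>set all_bas. bb (bHsa I2) j = vl (T (bHsa I2) j)"
  by (simp add: all_bas_def bb_def UNIV_idx_sum Tsym_def dl_def to_vl vl_eq_iff vl_eq0_iff vl_Nil coef_def)

lemma bbT: "bb i j = vl (T i j)"
proof -
  have hi: "i \<in> set all_bas" and hj: "j \<in> set all_bas" using UNIV_all_bas by auto
  show ?thesis using hi bbT_0[rule_format, OF hj] bbT_1[rule_format, OF hj] bbT_2[rule_format, OF hj] bbT_3[rule_format, OF hj] bbT_4[rule_format, OF hj] bbT_5[rule_format, OF hj] bbT_6[rule_format, OF hj] bbT_7[rule_format, OF hj] bbT_8[rule_format, OF hj] bbT_9[rule_format, OF hj] bbT_10[rule_format, OF hj] bbT_11[rule_format, OF hj] bbT_12[rule_format, OF hj] bbT_13[rule_format, OF hj] bbT_14[rule_format, OF hj] bbT_15[rule_format, OF hj] bbT_16[rule_format, OF hj] bbT_17[rule_format, OF hj] bbT_18[rule_format, OF hj] bbT_19[rule_format, OF hj] bbT_20[rule_format, OF hj] bbT_21[rule_format, OF hj]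
    unfolding all_bas_def by auto
qed

definition mulT :: "bas \<Rightarrow> (bas \<times> real) list \<Rightarrow> (bas \<times> real) list" where
  "mulT i L = concat (map (\<lambda>(b,c). map (\<lambda>(b',d). (b', c*d)) (T i b)) L)"

definition jac_list :: "bas \<Rightarrow> bas \<Rightarrow> bas \<Rightarrow> (bas \<times> real) list" where
  "jac_list i j k = mulT i (T j k) @ mulT j (T k i) @ mulT k (T i j)"

lemma jac_0: "\<forall>j\<in>set all_bas. \<forall>k\<in>set all_bas. vl (jac_list bJ j k) = 0"
  by (simp add: all_bas_def jac_list_def mulT_def vl_eq0_iff coef_def)

lemma jac_1: "\<forall>j\<in>set all_bas. \<forall>k\<in>set all_bas. vl (jac_list bH j k) = 0"
  by (simp add: all_bas_def jac_list_def mulT_def vl_eq0_iff coef_def)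

lemma jac_2: "\<forall>j\<in>set all_bas. \<forall>k\<in>set all_bas. vl (jac_list (bG I1) j k) = 0"
  by (simp add: all_bas_def jac_list_def mulT_def vl_eq0_iff coef_def)

lemma jac_3: "\<forall>j\<in>set all_bas. \<forall>k\<in>set all_bas. vl (jac_list (bG I2) j k) = 0"
  by (simp add: all_bas_def jac_list_def mulT_def vl_eq0_iff coef_def)

lemma jac_4: "\<forall>j\<in>set all_bas. \<forall>k\<in>set all_bas. vl (jac_list (bP I1) j k) = 0"
  by (simp add: all_bas_def jac_list_def mulT_def vl_eq0_iff coef_def)

lemma jac_5: "\<forall>j\<in>set all_bas. \<forall>k\<in>set all_bas. vl (jac_list (bP I2) j k) = 0"
  by (simp add: all_bas_def jac_list_def mulT_def vl_eq0_iff coef_def)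

lemma jac_6: "\<forall>j\<in>set all_bas. \<forall>k\<in>set all_bas. vl (jac_list (bJa I1) j k) = 0"
  by (simp add: all_bas_def jac_list_def mulT_def vl_eq0_iff coef_def)

lemma jac_7: "\<forall>j\<in>set all_bas. \<forall>k\<in>set all_bas. vl (jac_list (bJa I2) j k) = 0"
  by (simp add: all_bas_def jac_list_def mulT_def vl_eq0_iff coef_def)

lemma jac_8: "\<forall>j\<in>set all_bas. \<forall>k\<in>set all_bas. vl (jac_list (bHa I1) j k) = 0"
  by (simp add: all_bas_def jac_list_def mulT_def vl_eq0_iff coef_def)

lemma jac_9: "\<forall>j\<in>set all_bas. \<forall>k\<in>set all_bas. vl (jac_list (bHa I2) j k) = 0"
  by (simp add: all_bas_def jac_list_def mulT_def vl_eq0_iff coef_def)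

lemma jac_10: "\<forall>j\<in>set all_bas. \<forall>k\<in>set all_bas. vl (jac_list (bGs S11) j k) = 0"
  by (simp add: all_bas_def jac_list_def mulT_def vl_eq0_iff coef_def)

lemma jac_11: "\<forall>j\<in>set all_bas. \<forall>k\<in>set all_bas. vl (jac_list (bGs S12) j k) = 0"
  by (simp add: all_bas_def jac_list_def mulT_def vl_eq0_iff coef_def)

lemma jac_12: "\<forall>j\<in>set all_bas. \<forall>k\<in>set all_bas. vl (jac_list (bGs S22) j k) = 0"
  by (simp add: all_bas_def jac_list_def mulT_def vl_eq0_iff coef_def)

lemma jac_13: "\<forall>j\<in>set all_bas. \<forall>k\<in>set all_bas. vl (jac_list (bPs S11) j k) = 0"
  by (simp add: all_bas_def jac_list_def mulT_def vl_eq0_iff coef_def)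

lemma jac_14: "\<forall>j\<in>set all_bas. \<forall>k\<in>set all_bas. vl (jac_list (bPs S12) j k) = 0"
  by (simp add: all_bas_def jac_list_def mulT_def vl_eq0_iff coef_def)

lemma jac_15: "\<forall>j\<in>set all_bas. \<forall>k\<in>set all_bas. vl (jac_list (bPs S22) j k) = 0"
  by (simp add: all_bas_def jac_list_def mulT_def vl_eq0_iff coef_def)

lemma jac_16: "\<forall>j\<in>set all_bas. \<forall>k\<in>set all_bas. vl (jac_list bJs j k) = 0"
  by (simp add: all_bas_def jac_list_def mulT_def vl_eq0_iff coef_def)

lemma jac_17: "\<forall>j\<in>set all_bas. \<forall>k\<in>set all_bas. vl (jac_list bHs j k) = 0"
  by (simp add: all_bas_def jac_list_def mulT_def vl_eq0_iff coef_def)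

lemma jac_18: "\<forall>j\<in>set all_bas. \<forall>k\<in>set all_bas. vl (jac_list (bJsa I1) j k) = 0"
  by (simp add: all_bas_def jac_list_def mulT_def vl_eq0_iff coef_def)

lemma jac_19: "\<forall>j\<in>set all_bas. \<forall>k\<in>set all_bas. vl (jac_list (bJsa I2) j k) = 0"
  by (simp add: all_bas_def jac_list_def mulT_def vl_eq0_iff coef_def)

lemma jac_20: "\<forall>j\<in>set all_bas. \<forall>k\<in>set all_bas. vl (jac_list (bHsa I1) j k) = 0"
  by (simp add: all_bas_def jac_list_def mulT_def vl_eq0_iff coef_def)

lemma jac_21: "\<forall>j\<in>set all_bas. \<forall>k\<in>set all_bas. vl (jac_list (bHsa I2) j k) = 0"
  by (simp add: all_bas_def jac_list_def mulT_def vl_eq0_iff coef_def)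



lemma br_bilinear: "bilinear br"
  unfolding bilinear_def linear_iff br_def
  by (simp add: algebra_simps sum.distrib scaleR_sum_right)

lemma br_ev_left: "br (ev i) y = (\<Sum>j\<in>UNIV. y$j *\<^sub>R bb i j)"
proof -
  have "br (ev i) y = (\<Sum>i'\<in>UNIV. if i' = i then (\<Sum>j\<in>UNIV. y$j *\<^sub>R bb i' j) else 0)"
    unfolding br_def ev_comp by (rule sum.cong) auto
  also have "\<dots> = (\<Sum>j\<in>UNIV. y$j *\<^sub>R bb i j)" by simp
  finally show ?thesis .
qed

lemma br_ev_ev: "br (ev i) (ev j) = bb i j"
proof -
  have "br (ev i) (ev j) = (\<Sum>j'\<in>UNIV. if j' = j then bb i j' else 0)"
    unfolding br_ev_left ev_comp by (rule sum.cong) auto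
  then show ?thesis by simp
qed

lemma br_ev_vl: "br (ev i) (vl L) = vl (mulT i L)"
proof (induction L)
  case Nil
  then show ?case by (simp add: vl_Nil mulT_def bilinear_rzero[OF br_bilinear])
next
  case (Cons a L)
  obtain b c where a: "a = (b,c)" by force
  have "br (ev i) (vl (a # L)) = c *\<^sub>R br (ev i) (ev b) + br (ev i) (vl L)"
    by (simp add: a vl_Cons bilinear_radd[OF br_bilinear] bilinear_rmul[OF br_bilinear])
  also have "\<dots> = vl (mulT i (a # L))"
    by (simp add: Cons.IH br_ev_ev bbT vl_scale a mulT_def vl_append)
  finally show ?case .
qed

lemma jac_basis: "br (ev i) (br (ev j) (ev k)) + br (ev j) (br (ev k) (ev i)) + br (ev k) (br (ev i) (ev j)) = 0"
proof -
  have "br (ev i) (br (ev j) (ev k)) + br (ev j) (br (ev k) (ev i)) + br (ev k) (br (ev i) (ev j))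
      = vl (jac_list i j k)"
    by (simp add: br_ev_ev bbT br_ev_vl jac_list_def vl_append)
  also have "\<dots> = 0"
  proof -
    have hi: "i \<in> set all_bas" and hj: "j \<in> set all_bas" and hk: "k \<in> set all_bas"
      using UNIV_all_bas by auto
    show ?thesis using hi jac_0[rule_format, OF hj hk] jac_1[rule_format, OF hj hk] jac_2[rule_format, OF hj hk] jac_3[rule_format, OF hj hk] jac_4[rule_format, OF hj hk] jac_5[rule_format, OF hj hk] jac_6[rule_format, OF hj hk] jac_7[rule_format, OF hj hk] jac_8[rule_format, OF hj hk] jac_9[rule_format, OF hj hk] jac_10[rule_format, OF hj hk] jac_11[rule_format, OF hj hk] jac_12[rule_format, OF hj hk] jac_13[rule_format, OF hj hk] jac_14[rule_format, OF hj hk] jac_15[rule_format, OF hj hk] jac_16[rule_format, OF hj hk] jac_17[rule_format, OF hj hk] jac_18[rule_format, OF hj hk] jac_19[rule_format, OF hj hk] jac_20[rule_format, OF hj hk] jac_21[rule_format, OF hj hk]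
      unfolding all_bas_def by auto
  qed
  finally show ?thesis .
qed

lemma Basis_V: "(Basis :: V set) = range ev"
  by (auto simp: Basis_vec_def ev_def)



lemma anti_0: "\<forall>j\<in>set all_bas. vl (T bJ j @ T j bJ) = 0"
  by (simp add: all_bas_def vl_eq0_iff coef_def)

lemma anti_1: "\<forall>j\<in>set all_bas. vl (T bH j @ T j bH) = 0"
  by (simp add: all_bas_def vl_eq0_iff coef_def)

lemma anti_2: "\<forall>j\<in>set all_bas. vl (T (bG I1) j @ T j (bG I1)) = 0"
  by (simp add: all_bas_def vl_eq0_iff coef_def)

lemma anti_3: "\<forall>j\<in>set all_bas. vl (T (bG I2) j @ T j (bG I2)) = 0"
  by (simp add: all_bas_def vl_eq0_iff coef_def)

lemma anti_4: "\<forall>j\<in>set all_bas. vl (T (bP I1) j @ T j (bP I1)) = 0"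
  by (simp add: all_bas_def vl_eq0_iff coef_def)

lemma anti_5: "\<forall>j\<in>set all_bas. vl (T (bP I2) j @ T j (bP I2)) = 0"
  by (simp add: all_bas_def vl_eq0_iff coef_def)

lemma anti_6: "\<forall>j\<in>set all_bas. vl (T (bJa I1) j @ T j (bJa I1)) = 0"
  by (simp add: all_bas_def vl_eq0_iff coef_def)

lemma anti_7: "\<forall>j\<in>set all_bas. vl (T (bJa I2) j @ T j (bJa I2)) = 0"
  by (simp add: all_bas_def vl_eq0_iff coef_def)

lemma anti_8: "\<forall>j\<in>set all_bas. vl (T (bHa I1) j @ T j (bHa I1)) = 0"
  by (simp add: all_bas_def vl_eq0_iff coef_def)

lemma anti_9: "\<forall>j\<in>set all_bas. vl (T (bHa I2) j @ T j (bHa I2)) = 0"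
  by (simp add: all_bas_def vl_eq0_iff coef_def)

lemma anti_10: "\<forall>j\<in>set all_bas. vl (T (bGs S11) j @ T j (bGs S11)) = 0"
  by (simp add: all_bas_def vl_eq0_iff coef_def)

lemma anti_11: "\<forall>j\<in>set all_bas. vl (T (bGs S12) j @ T j (bGs S12)) = 0"
  by (simp add: all_bas_def vl_eq0_iff coef_def)

lemma anti_12: "\<forall>j\<in>set all_bas. vl (T (bGs S22) j @ T j (bGs S22)) = 0"
  by (simp add: all_bas_def vl_eq0_iff coef_def)

lemma anti_13: "\<forall>j\<in>set all_bas. vl (T (bPs S11) j @ T j (bPs S11)) = 0"
  by (simp add: all_bas_def vl_eq0_iff coef_def)

lemma anti_14: "\<forall>j\<in>set all_bas. vl (T (bPs S12) j @ T j (bPs S12)) = 0"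
  by (simp add: all_bas_def vl_eq0_iff coef_def)

lemma anti_15: "\<forall>j\<in>set all_bas. vl (T (bPs S22) j @ T j (bPs S22)) = 0"
  by (simp add: all_bas_def vl_eq0_iff coef_def)

lemma anti_16: "\<forall>j\<in>set all_bas. vl (T bJs j @ T j bJs) = 0"
  by (simp add: all_bas_def vl_eq0_iff coef_def)

lemma anti_17: "\<forall>j\<in>set all_bas. vl (T bHs j @ T j bHs) = 0"
  by (simp add: all_bas_def vl_eq0_iff coef_def)

lemma anti_18: "\<forall>j\<in>set all_bas. vl (T (bJsa I1) j @ T j (bJsa I1)) = 0"
  by (simp add: all_bas_def vl_eq0_iff coef_def)

lemma anti_19: "\<forall>j\<in>set all_bas. vl (T (bJsa I2) j @ T j (bJsa I2)) = 0"
  by (simp add: all_bas_def vl_eq0_iff coef_def)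

lemma anti_20: "\<forall>j\<in>set all_bas. vl (T (bHsa I1) j @ T j (bHsa I1)) = 0"
  by (simp add: all_bas_def vl_eq0_iff coef_def)

lemma anti_21: "\<forall>j\<in>set all_bas. vl (T (bHsa I2) j @ T j (bHsa I2)) = 0"
  by (simp add: all_bas_def vl_eq0_iff coef_def)

lemma bb_anti: "bb j i = - bb i j"
proof -
  have hi: "i \<in> set all_bas" and hj: "j \<in> set all_bas" using UNIV_all_bas by auto
  have "vl (T i j @ T j i) = 0"
    using hi anti_0[rule_format, OF hj] anti_1[rule_format, OF hj] anti_2[rule_format, OF hj] anti_3[rule_format, OF hj] anti_4[rule_format, OF hj] anti_5[rule_format, OF hj] anti_6[rule_format, OF hj] anti_7[rule_format, OF hj] anti_8[rule_format, OF hj] anti_9[rule_format, OF hj] anti_10[rule_format, OF hj] anti_11[rule_format, OF hj] anti_12[rule_format, OF hj] anti_13[rule_format, OF hj] anti_14[rule_format, OF hj] anti_15[rule_format, OF hj] anti_16[rule_format, OF hj] anti_17[rule_format, OF hj] anti_18[rule_format, OF hj] anti_19[rule_format, OF hj] anti_20[rule_format, OF hj] anti_21[rule_format, OF hj]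
    unfolding all_bas_def by auto
  then show ?thesis by (simp add: bbT vl_append eq_neg_iff_add_eq_0 add.commute)
qed


lemmas brl = bilinear_ladd[OF br_bilinear] bilinear_radd[OF br_bilinear]
  bilinear_lmul[OF br_bilinear] bilinear_rmul[OF br_bilinear]

lemma br_self: "br x x = 0"
proof -
  have sw: "(x $ a * x $ b) *\<^sub>R bb a b = - ((x $ b * x $ a) *\<^sub>R bb b a)" for a b
    using bb_anti[of a b] bb_anti[of b a] by (simp add: mult.commute)
  have "br x x = (\<Sum>j\<in>UNIV. \<Sum>i\<in>UNIV. (x $ i * x $ j) *\<^sub>R bb i j)"
    unfolding br_def by (rule sum.swap)
  also have "\<dots> = (\<Sum>j\<in>UNIV. \<Sum>i\<in>UNIV. - ((x $ j * x $ i) *\<^sub>R bb j i))"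
    by (rule sum.cong[OF refl], rule sum.cong[OF refl], rule sw)
  also have "\<dots> = - br x x"
    unfolding br_def by (simp add: sum_negf)
  finally have h: "br x x = - br x x" .
  show ?thesis unfolding vec_eq_iff
  proof
    fix i
    from h have "br x x $ i = - (br x x $ i)" by (metis vector_uminus_component)
    then show "br x x $ i = 0 $ i" by simp
  qed
qed

lemma jac_all: "br x (br y z) + br y (br z x) + br z (br x y) = 0"
proof -
  have A: "br (ev i) (br (ev j) z) + br (ev j) (br z (ev i)) + br z (br (ev i) (ev j)) = 0" for i j z
  proof -
    have "(\<lambda>z. br (ev i) (br (ev j) z) + br (ev j) (br z (ev i)) + br z (br (ev i) (ev j))) = (\<lambda>z. 0)"
    proof (rule linear_eq_stdbasis)
      show "linear (\<lambda>z. br (ev i) (br (ev j) z) + br (ev j) (br z (ev i)) + br z (br (ev i) (ev j)))"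
        unfolding linear_iff by (simp add: brl algebra_simps)
      show "linear (\<lambda>z::V. 0::V)" unfolding linear_iff by simp
      fix b :: V assume "b \<in> Basis"
      then obtain k where "b = ev k" using Basis_V by auto
      then show "br (ev i) (br (ev j) b) + br (ev j) (br b (ev i)) + br b (br (ev i) (ev j)) = 0"
        using jac_basis[of i j k] by (simp add: algebra_simps)
    qed
    then show ?thesis by meson
  qed
  have "(\<lambda>x y. br x (br y z) + br y (br z x) + br z (br x y)) = (\<lambda>x y. 0)"
  proof (rule bilinear_eq_stdbasis)
    show "bilinear (\<lambda>x y. br x (br y z) + br y (br z x) + br z (br x y))"
      unfolding bilinear_def linear_iff by (simp add: brl algebra_simps)
    show "bilinear (\<lambda>x::V. \<lambda>y::V. 0::V)" unfolding bilinear_def linear_iff by simp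
    fix a b :: V assume ab: "a \<in> Basis" "b \<in> Basis"
    obtain i where "a = ev i" using ab(1) Basis_V by auto
    moreover obtain j where "b = ev j" using ab(2) Basis_V by auto
    ultimately show "br a (br b z) + br b (br z a) + br z (br a b) = 0" using A[of i j z] by simp
  qed
  then show ?thesis by meson
qed

lemma lie: "lie_algebra br"
  unfolding lie_algebra_def using br_bilinear br_self jac_all by blast



lemma inv_0: "\<forall>i\<in>set all_bas. \<forall>j\<in>set all_bas. (\<Sum>(b,c)\<leftarrow>T bJ i. c * gm b j) + (\<Sum>(b,c)\<leftarrow>T bJ j. c * gm i b) = 0"
  by (simp add: all_bas_def gm_def gt_def dl_def)

lemma inv_1: "\<forall>i\<in>set all_bas. \<forall>j\<in>set all_bas. (\<Sum>(b,c)\<leftarrow>T bH i. c * gm b j) + (\<Sum>(b,c)\<leftarrow>T bH j. c * gm i b) = 0"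
  by (simp add: all_bas_def gm_def gt_def dl_def)

lemma inv_2: "\<forall>i\<in>set all_bas. \<forall>j\<in>set all_bas. (\<Sum>(b,c)\<leftarrow>T (bG I1) i. c * gm b j) + (\<Sum>(b,c)\<leftarrow>T (bG I1) j. c * gm i b) = 0"
  by (simp add: all_bas_def gm_def gt_def dl_def)

lemma inv_3: "\<forall>i\<in>set all_bas. \<forall>j\<in>set all_bas. (\<Sum>(b,c)\<leftarrow>T (bG I2) i. c * gm b j) + (\<Sum>(b,c)\<leftarrow>T (bG I2) j. c * gm i b) = 0"
  by (simp add: all_bas_def gm_def gt_def dl_def)

lemma inv_4: "\<forall>i\<in>set all_bas. \<forall>j\<in>set all_bas. (\<Sum>(b,c)\<leftarrow>T (bP I1) i. c * gm b j) + (\<Sum>(b,c)\<leftarrow>T (bP I1) j. c * gm i b) = 0"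
  by (simp add: all_bas_def gm_def gt_def dl_def)

lemma inv_5: "\<forall>i\<in>set all_bas. \<forall>j\<in>set all_bas. (\<Sum>(b,c)\<leftarrow>T (bP I2) i. c * gm b j) + (\<Sum>(b,c)\<leftarrow>T (bP I2) j. c * gm i b) = 0"
  by (simp add: all_bas_def gm_def gt_def dl_def)

lemma inv_6: "\<forall>i\<in>set all_bas. \<forall>j\<in>set all_bas. (\<Sum>(b,c)\<leftarrow>T (bJa I1) i. c * gm b j) + (\<Sum>(b,c)\<leftarrow>T (bJa I1) j. c * gm i b) = 0"
  by (simp add: all_bas_def gm_def gt_def dl_def)

lemma inv_7: "\<forall>i\<in>set all_bas. \<forall>j\<in>set all_bas. (\<Sum>(b,c)\<leftarrow>T (bJa I2) i. c * gm b j) + (\<Sum>(b,c)\<leftarrow>T (bJa I2) j. c * gm i b) = 0"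
  by (simp add: all_bas_def gm_def gt_def dl_def)

lemma inv_8: "\<forall>i\<in>set all_bas. \<forall>j\<in>set all_bas. (\<Sum>(b,c)\<leftarrow>T (bHa I1) i. c * gm b j) + (\<Sum>(b,c)\<leftarrow>T (bHa I1) j. c * gm i b) = 0"
  by (simp add: all_bas_def gm_def gt_def dl_def)

lemma inv_9: "\<forall>i\<in>set all_bas. \<forall>j\<in>set all_bas. (\<Sum>(b,c)\<leftarrow>T (bHa I2) i. c * gm b j) + (\<Sum>(b,c)\<leftarrow>T (bHa I2) j. c * gm i b) = 0"
  by (simp add: all_bas_def gm_def gt_def dl_def)

lemma inv_10: "\<forall>i\<in>set all_bas. \<forall>j\<in>set all_bas. (\<Sum>(b,c)\<leftarrow>T (bGs S11) i. c * gm b j) + (\<Sum>(b,c)\<leftarrow>T (bGs S11) j. c * gm i b) = 0"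
  by (simp add: all_bas_def gm_def gt_def dl_def)

lemma inv_11: "\<forall>i\<in>set all_bas. \<forall>j\<in>set all_bas. (\<Sum>(b,c)\<leftarrow>T (bGs S12) i. c * gm b j) + (\<Sum>(b,c)\<leftarrow>T (bGs S12) j. c * gm i b) = 0"
  by (simp add: all_bas_def gm_def gt_def dl_def)

lemma inv_12: "\<forall>i\<in>set all_bas. \<forall>j\<in>set all_bas. (\<Sum>(b,c)\<leftarrow>T (bGs S22) i. c * gm b j) + (\<Sum>(b,c)\<leftarrow>T (bGs S22) j. c * gm i b) = 0"
  by (simp add: all_bas_def gm_def gt_def dl_def)

lemma inv_13: "\<forall>i\<in>set all_bas. \<forall>j\<in>set all_bas. (\<Sum>(b,c)\<leftarrow>T (bPs S11) i. c * gm b j) + (\<Sum>(b,c)\<leftarrow>T (bPs S11) j. c * gm i b) = 0"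
  by (simp add: all_bas_def gm_def gt_def dl_def)

lemma inv_14: "\<forall>i\<in>set all_bas. \<forall>j\<in>set all_bas. (\<Sum>(b,c)\<leftarrow>T (bPs S12) i. c * gm b j) + (\<Sum>(b,c)\<leftarrow>T (bPs S12) j. c * gm i b) = 0"
  by (simp add: all_bas_def gm_def gt_def dl_def)

lemma inv_15: "\<forall>i\<in>set all_bas. \<forall>j\<in>set all_bas. (\<Sum>(b,c)\<leftarrow>T (bPs S22) i. c * gm b j) + (\<Sum>(b,c)\<leftarrow>T (bPs S22) j. c * gm i b) = 0"
  by (simp add: all_bas_def gm_def gt_def dl_def)

lemma inv_16: "\<forall>i\<in>set all_bas. \<forall>j\<in>set all_bas. (\<Sum>(b,c)\<leftarrow>T bJs i. c * gm b j) + (\<Sum>(b,c)\<leftarrow>T bJs j. c * gm i b) = 0"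
  by (simp add: all_bas_def gm_def gt_def dl_def)

lemma inv_17: "\<forall>i\<in>set all_bas. \<forall>j\<in>set all_bas. (\<Sum>(b,c)\<leftarrow>T bHs i. c * gm b j) + (\<Sum>(b,c)\<leftarrow>T bHs j. c * gm i b) = 0"
  by (simp add: all_bas_def gm_def gt_def dl_def)

lemma inv_18: "\<forall>i\<in>set all_bas. \<forall>j\<in>set all_bas. (\<Sum>(b,c)\<leftarrow>T (bJsa I1) i. c * gm b j) + (\<Sum>(b,c)\<leftarrow>T (bJsa I1) j. c * gm i b) = 0"
  by (simp add: all_bas_def gm_def gt_def dl_def)

lemma inv_19: "\<forall>i\<in>set all_bas. \<forall>j\<in>set all_bas. (\<Sum>(b,c)\<leftarrow>T (bJsa I2) i. c * gm b j) + (\<Sum>(b,c)\<leftarrow>T (bJsa I2) j. c * gm i b) = 0"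
  by (simp add: all_bas_def gm_def gt_def dl_def)

lemma inv_20: "\<forall>i\<in>set all_bas. \<forall>j\<in>set all_bas. (\<Sum>(b,c)\<leftarrow>T (bHsa I1) i. c * gm b j) + (\<Sum>(b,c)\<leftarrow>T (bHsa I1) j. c * gm i b) = 0"
  by (simp add: all_bas_def gm_def gt_def dl_def)

lemma inv_21: "\<forall>i\<in>set all_bas. \<forall>j\<in>set all_bas. (\<Sum>(b,c)\<leftarrow>T (bHsa I2) i. c * gm b j) + (\<Sum>(b,c)\<leftarrow>T (bHsa I2) j. c * gm i b) = 0"
  by (simp add: all_bas_def gm_def gt_def dl_def)


lemma met_bilinear: "bilinear met"
  unfolding bilinear_def linear_iff met_def
  by (simp add: algebra_simps sum.distrib sum_distrib_left)

lemmas metl = bilinear_ladd[OF met_bilinear] bilinear_radd[OF met_bilinear]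
  bilinear_lmul[OF met_bilinear] bilinear_rmul[OF met_bilinear]

lemma met_ev_right: "met x (ev j) = (\<Sum>i\<in>UNIV. x $ i * gm i j)"
proof -
  have "met x (ev j) = (\<Sum>i\<in>UNIV. \<Sum>j'\<in>UNIV. if j' = j then x $ i * gm i j' else 0)"
    unfolding met_def ev_comp by (intro sum.cong) auto
  then show ?thesis by simp
qed

lemma met_ev_ev: "met (ev i) (ev j) = gm i j"
proof -
  have "met (ev i) (ev j) = (\<Sum>i'\<in>UNIV. if i' = i then gm i' j else 0)"
    unfolding met_ev_right ev_comp by (intro sum.cong) auto
  then show ?thesis by simp
qed

lemma met_vl_left: "met (vl L) y = (\<Sum>(b,c)\<leftarrow>L. c * met (ev b) y)"
  by (induction L) (auto simp: vl_Nil vl_Cons metl bilinear_lzero[OF met_bilinear])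

lemma met_vl_right: "met x (vl L) = (\<Sum>(b,c)\<leftarrow>L. c * met x (ev b))"
  by (induction L) (auto simp: vl_Nil vl_Cons metl bilinear_rzero[OF met_bilinear])

lemma inv_basis: "met (br (ev k) (ev i)) (ev j) + met (ev i) (br (ev k) (ev j)) = 0"
proof -
  have hi: "i \<in> set all_bas" and hj: "j \<in> set all_bas" and hk: "k \<in> set all_bas"
    using UNIV_all_bas by auto
  have "(\<Sum>(b,c)\<leftarrow>T k i. c * gm b j) + (\<Sum>(b,c)\<leftarrow>T k j. c * gm i b) = 0"
    using hk inv_0[rule_format, OF hi hj] inv_1[rule_format, OF hi hj] inv_2[rule_format, OF hi hj] inv_3[rule_format, OF hi hj] inv_4[rule_format, OF hi hj] inv_5[rule_format, OF hi hj] inv_6[rule_format, OF hi hj] inv_7[rule_format, OF hi hj] inv_8[rule_format, OF hi hj] inv_9[rule_format, OF hi hj] inv_10[rule_format, OF hi hj] inv_11[rule_format, OF hi hj] inv_12[rule_format, OF hi hj] inv_13[rule_format, OF hi hj] inv_14[rule_format, OF hi hj] inv_15[rule_format, OF hi hj] inv_16[rule_format, OF hi hj] inv_17[rule_format, OF hi hj] inv_18[rule_format, OF hi hj] inv_19[rule_format, OF hi hj] inv_20[rule_format, OF hi hj] inv_21[rule_format, OF hi hj]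
    unfolding all_bas_def by auto
  then show ?thesis
    by (simp add: br_ev_ev bbT met_vl_left met_vl_right met_ev_ev case_prod_beta)
qed

lemma met_inv: "met (br z x) y + met x (br z y) = 0"
proof -
  have A: "met (br z (ev i)) (ev j) + met (ev i) (br z (ev j)) = 0" for i j z
  proof -
    have "(\<lambda>z. met (br z (ev i)) (ev j) + met (ev i) (br z (ev j))) = (\<lambda>z. 0)"
    proof (rule linear_eq_stdbasis)
      show "linear (\<lambda>z. met (br z (ev i)) (ev j) + met (ev i) (br z (ev j)))"
        unfolding linear_iff by (simp add: brl metl algebra_simps)
      show "linear (\<lambda>z::V. 0::real)" unfolding linear_iff by simp
      fix b :: V assume "b \<in> Basis"
      then obtain k where "b = ev k" using Basis_V by auto
      then show "met (br b (ev i)) (ev j) + met (ev i) (br b (ev j)) = 0"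
        using inv_basis[of k i j] by simp
    qed
    then show ?thesis by meson
  qed
  have "(\<lambda>x y. met (br z x) y + met x (br z y)) = (\<lambda>x y. 0)"
  proof (rule bilinear_eq_stdbasis)
    show "bilinear (\<lambda>x y. met (br z x) y + met x (br z y))"
      unfolding bilinear_def linear_iff by (simp add: brl metl algebra_simps)
    show "bilinear (\<lambda>x::V. \<lambda>y::V. 0::real)" unfolding bilinear_def linear_iff by simp
    fix a b :: V assume ab: "a \<in> Basis" "b \<in> Basis"
    obtain i where "a = ev i" using ab(1) Basis_V by auto
    moreover obtain j where "b = ev j" using ab(2) Basis_V by auto
    ultimately show "met (br z a) b + met a (br z b) = 0" using A[of z i j] by simp
  qed
  then show ?thesis by meson
qed

lemma met_sym: "met x y = met y x"
proof -
  have "met x y = (\<Sum>j\<in>UNIV. \<Sum>i\<in>UNIV. x $ i * y $ j * gm i j)"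
    unfolding met_def by (rule sum.swap)
  also have "\<dots> = met y x"
    unfolding met_def gm_def by (simp add: algebra_simps)
  finally show ?thesis .
qed

lemma met_nondeg: assumes "\<forall>y. met x y = 0" shows "x = 0"
proof -
  have e: "(\<Sum>i\<leftarrow>all_bas. x $ i * gm i j) = 0" for j
  proof -
    have "met x (ev j) = 0" using assms by simp
    then show ?thesis unfolding met_ev_right UNIV_all_bas
      by (simp add: sum_list_distinct_conv_sum_set all_bas_def)
  qed
  have "\<forall>l\<in>set all_bas. x $ l = 0"
    using e[of "bJ"] e[of "bH"] e[of "(bG I1)"] e[of "(bG I2)"] e[of "(bP I1)"] e[of "(bP I2)"] e[of "(bJa I1)"] e[of "(bJa I2)"] e[of "(bHa I1)"] e[of "(bHa I2)"] e[of "(bGs S11)"] e[of "(bGs S12)"] e[of "(bGs S22)"] e[of "(bPs S11)"] e[of "(bPs S12)"] e[of "(bPs S22)"] e[of "bJs"] e[of "bHs"] e[of "(bJsa I1)"] e[of "(bJsa I2)"] e[of "(bHsa I1)"] e[of "(bHsa I2)"]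
    by (simp add: all_bas_def gm_def gt_def dl_def)
  then show ?thesis using UNIV_all_bas by (auto simp: vec_eq_iff)
qed

lemma metric: "invariant_metric br met"
  unfolding invariant_metric_def using met_bilinear met_sym met_nondeg met_inv by blast



definition good :: "bas list" where
  "good = [bH, bJ, bHs, bJs, bP I1, bP I2, bG I1, bG I2]"

fun emb :: "ebas \<Rightarrow> bas" where
  "emb eJ = bJ" | "emb eH = bH" | "emb (eG a) = bG a" | "emb (eP a) = bP a"
| "emb eJs = bJs" | "emb eHs = bHs"

definition all_ebas :: "ebas list" where
  "all_ebas = [eJ, eH, eG I1, eG I2, eP I1, eP I2, eJs, eHs]"

lemma UNIV_all_ebas: "(UNIV::ebas set) = set all_ebas"
  by (simp add: UNIV_ebas UNIV_idx all_ebas_def image_def; blast)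

lemma idx_disj: "a = I1 \<or> a = I2" by (cases a) auto

lemma delta_scaleR: "(\<Sum>j\<in>(UNIV::'b::finite set). (if j = k then 1 else 0) *\<^sub>R (f j :: 'a::real_vector)) = f k"
proof -
  have "(\<Sum>j\<in>(UNIV::'b set). (if j = k then 1 else 0) *\<^sub>R f j) = (\<Sum>j\<in>UNIV. if j = k then f j else 0)"
    by (rule sum.cong) auto
  then show ?thesis by simp
qed

lemma delta_mult: "(\<Sum>j\<in>(UNIV::'b::finite set). (g j :: real) * (if l = j then 1 else 0)) = g l"
proof -
  have "(\<Sum>j\<in>(UNIV::'b set). g j * (if l = j then 1 else 0)) = (\<Sum>j\<in>UNIV. if j = l then g j else 0)"
    by (rule sum.cong) auto
  then show ?thesis by simp
qed

lemma emb_inj: "emb a = emb b \<longleftrightarrow> a = b"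
  by (cases a; cases b; simp)

lemma good_emb: "b \<in> set good \<longleftrightarrow> (\<exists>e. b = emb e)"
proof
  assume "b \<in> set good"
  then show "\<exists>e. b = emb e" unfolding good_def
    by (auto intro: exI[of _ eJ] exI[of _ eH] exI[of _ eJs] exI[of _ eHs]
       exI[of _ "eP I1"] exI[of _ "eP I2"] exI[of _ "eG I1"] exI[of _ "eG I2"])
next
  assume "\<exists>e. b = emb e"
  then obtain e where "b = emb e" by blast
  then show "b \<in> set good"
    using idx_disj by (cases e) (auto simp: good_def)
qed

lemma S0_eq: "{vH, vJ, vHs, vJs} \<union> range (\<lambda>a. vP a) \<union> range (\<lambda>a. vG a) = ev ` set good"
  by (auto simp: good_def UNIV_idx)

definition Z :: "V set" where "Z = {x. \<forall>b. b \<notin> set good \<longrightarrow> x $ b = 0}"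

lemma subspace_Z: "subspace Z"
  unfolding subspace_def Z_def by auto

lemma expand_V: "x = (\<Sum>b\<in>UNIV. x $ b *\<^sub>R ev b)"
  by (simp add: vec_eq_iff sum_component ev_comp delta_mult)

lemma bsub_eq: "bargmann_sub = Z"
proof
  show "bargmann_sub \<subseteq> Z"
    unfolding bargmann_sub_def S0_eq
    apply (rule span_minimal)
     apply (auto simp: Z_def ev_comp)[1]
    apply (rule subspace_Z)
    done
next
  show "Z \<subseteq> bargmann_sub"
  proof
    fix x assume x: "x \<in> Z"
    have "(\<Sum>b\<in>UNIV. x $ b *\<^sub>R ev b) \<in> span (ev ` set good)"
    proof (rule span_sum)
      fix b :: bas
      show "x $ b *\<^sub>R ev b \<in> span (ev ` set good)"
      proof (cases "b \<in> set good")
        case True then show ?thesis by (intro span_scale span_base) auto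
      next
        case False then have "x $ b = 0" using x by (auto simp: Z_def)
        then show ?thesis by (simp add: span_zero)
      qed
    qed
    then show "x \<in> bargmann_sub"
      unfolding bargmann_sub_def S0_eq using expand_V[of x] by simp
  qed
qed

lemma T_good: "\<forall>c\<in>set good. \<forall>d\<in>set good. list_all (\<lambda>(b,_). b \<in> set good) (T c d)"
  by (simp add: good_def)

lemma sub: "lie_subalgebra br bargmann_sub"
  unfolding lie_subalgebra_def
proof
  show "subspace bargmann_sub" unfolding bargmann_sub_def by (rule subspace_span)
  show "\<forall>x\<in>bargmann_sub. \<forall>y\<in>bargmann_sub. br x y \<in> bargmann_sub"
  proof (intro ballI)
    fix x y assume x: "x \<in> bargmann_sub" and y: "y \<in> bargmann_sub"
    have "(br x y) $ b = 0" if b: "b \<notin> set good" for b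
    proof (rule bilinear_eq[where f = "\<lambda>x y. (br x y) $ b" and g = "\<lambda>x y. 0"
          and B = "ev ` set good" and C = "ev ` set good" and S = bargmann_sub and T = bargmann_sub])
      show "bilinear (\<lambda>x y. br x y $ b)"
        unfolding bilinear_def linear_iff by (simp add: brl)
      show "bilinear (\<lambda>x::V. \<lambda>y::V. 0::real)" unfolding bilinear_def linear_iff by simp
      show "bargmann_sub \<subseteq> span (ev ` set good)" unfolding bargmann_sub_def S0_eq by simp
      show "bargmann_sub \<subseteq> span (ev ` set good)" unfolding bargmann_sub_def S0_eq by simp
      show "x \<in> bargmann_sub" "y \<in> bargmann_sub" using x y by auto
      fix u v assume "u \<in> ev ` set good" "v \<in> ev ` set good"
      then obtain c d where cd: "c \<in> set good" "d \<in> set good" "u = ev c" "v = ev d" by auto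
      then have "list_all (\<lambda>(b,_). b \<in> set good) (T c d)" using T_good by blast
      then have "b \<notin> set (map fst (T c d))" using b by (auto simp: list_all_iff)
      then show "br u v $ b = 0" using cd by (simp add: br_ev_ev bbT vl_comp coef_notin)
    qed
    then show "br x y \<in> bargmann_sub" unfolding bsub_eq Z_def by auto
  qed
qed

definition fe :: "V \<Rightarrow> EB" where "fe x = (\<chi> e. x $ emb e)"

lemma fe_linear: "linear fe"
  unfolding linear_iff fe_def by (simp add: vec_eq_iff)

lemma ebr_bilinear: "bilinear ebr"
  unfolding bilinear_def linear_iff ebr_def
  by (simp add: algebra_simps sum.distrib scaleR_sum_right)

lemma eev_comp: "eev k $ i = (if i = k then 1 else 0)"
  by (simp add: eev_def axis_def)

lemma ebr_eev_left: "ebr (eev i) y = (\<Sum>j\<in>UNIV. y$j *\<^sub>R ebb i j)"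
proof -
  have "ebr (eev i) y = (\<Sum>i'\<in>UNIV. if i' = i then (\<Sum>j\<in>UNIV. y$j *\<^sub>R ebb i' j) else 0)"
    unfolding ebr_def eev_comp by (rule sum.cong) auto
  also have "\<dots> = (\<Sum>j\<in>UNIV. y$j *\<^sub>R ebb i j)" by simp
  finally show ?thesis .
qed

lemma ebr_eev: "ebr (eev i) (eev j) = ebb i j"
  by (simp add: ebr_eev_left eev_comp delta_scaleR)

lemma fe_ev: "fe (ev (emb e)) = eev e"
  by (simp add: fe_def vec_eq_iff ev_comp eev_comp emb_inj)

lemma bracket_table: "\<forall>e1\<in>set all_ebas. \<forall>e2\<in>set all_ebas. \<forall>e\<in>set all_ebas.
   coef (T (emb e1) (emb e2)) (emb e) = ebb e1 e2 $ e"
  by (simp add: all_ebas_def coef_def ebb_def UNIV_idx_sum eev_comp)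

lemma fe_bb: "fe (bb (emb e1) (emb e2)) = ebb e1 e2"
proof -
  have "e1 \<in> set all_ebas" "e2 \<in> set all_ebas" using UNIV_all_ebas by auto
  then have "\<forall>e\<in>set all_ebas. coef (T (emb e1) (emb e2)) (emb e) = ebb e1 e2 $ e"
    using bracket_table by blast
  then show ?thesis using UNIV_all_ebas by (auto simp: fe_def vec_eq_iff bbT vl_comp)
qed

lemma iso: "lie_iso_sub br bargmann_sub ebr"
  unfolding lie_iso_sub_def
proof (intro exI conjI)
  show "linear fe" by (rule fe_linear)
  show "bij_betw fe bargmann_sub UNIV"
    unfolding bij_betw_def
  proof
    show "inj_on fe bargmann_sub"
    proof
      fix x y assume x: "x \<in> bargmann_sub" and y: "y \<in> bargmann_sub" and f: "fe x = fe y"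
      show "x = y" unfolding vec_eq_iff
      proof
        fix b
        show "x $ b = y $ b"
        proof (cases "b \<in> set good")
          case True
          then obtain e where "b = emb e" using good_emb by blast
          then show ?thesis using f by (auto simp: fe_def vec_eq_iff)
        next
          case False
          then show ?thesis using x y unfolding bsub_eq Z_def by auto
        qed
      qed
    qed
    show "fe ` bargmann_sub = UNIV"
    proof (intro set_eqI iffI)
      fix w :: EB
      let ?x = "(\<Sum>e\<in>UNIV. w $ e *\<^sub>R ev (emb e))"
      have "?x \<in> bargmann_sub"
        unfolding bargmann_sub_def S0_eq
        by (intro span_sum span_scale span_base) (metis good_emb image_eqI)
      moreover have "fe ?x = w"
      proof -
        have "fe ?x $ e = w $ e" for e
          by (simp add: fe_def sum_component ev_comp emb_inj delta_mult)
        then show ?thesis by (simp add: vec_eq_iff)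
      qed
      ultimately show "w \<in> fe ` bargmann_sub" by (metis image_eqI)
    qed simp
  qed
  show "\<forall>x\<in>bargmann_sub. \<forall>y\<in>bargmann_sub. fe (br x y) = ebr (fe x) (fe y)"
  proof (intro ballI)
    fix x y assume x: "x \<in> bargmann_sub" and y: "y \<in> bargmann_sub"
    show "fe (br x y) = ebr (fe x) (fe y)"
    proof (rule bilinear_eq[where f = "\<lambda>x y. fe (br x y)" and g = "\<lambda>x y. ebr (fe x) (fe y)"
          and B = "ev ` set good" and C = "ev ` set good" and S = bargmann_sub and T = bargmann_sub])
      show "bilinear (\<lambda>x y. fe (br x y))"
        unfolding bilinear_def linear_iff
        by (simp add: brl linear_add[OF fe_linear] linear_scale[OF fe_linear])
      show "bilinear (\<lambda>x y. ebr (fe x) (fe y))"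
        unfolding bilinear_def linear_iff
        by (simp add: bilinear_ladd[OF ebr_bilinear] bilinear_radd[OF ebr_bilinear]
            bilinear_lmul[OF ebr_bilinear] bilinear_rmul[OF ebr_bilinear]
            linear_add[OF fe_linear] linear_scale[OF fe_linear])
      show "bargmann_sub \<subseteq> span (ev ` set good)" unfolding bargmann_sub_def S0_eq by simp
      show "bargmann_sub \<subseteq> span (ev ` set good)" unfolding bargmann_sub_def S0_eq by simp
      show "x \<in> bargmann_sub" "y \<in> bargmann_sub" using x y by auto
      fix u v assume "u \<in> ev ` set good" "v \<in> ev ` set good"
      then obtain e1 e2 where "u = ev (emb e1)" "v = ev (emb e2)" using good_emb by auto
      then show "fe (br u v) = ebr (fe u) (fe v)"
        by (simp add: br_ev_ev fe_bb fe_ev ebr_eev)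
    qed
  qed
qed

theorem mainTheorem10:
  shows "lie_algebra br \<and> invariant_metric br met
         \<and> lie_subalgebra br bargmann_sub \<and> lie_iso_sub br bargmann_sub ebr"
  using lie metric sub iso by blast


end
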